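(* Let $\Delta\in\mathbb F^{m\times m}$ be a connection matrix with column/row partition $J_0,\dots,J_b$, and let $\Delta^0,\dots,\Delta^m$, $T^1,\dots,T^{m-1}$ be produced by the Incremental Sweeping Algorithm applied to $\Delta$. Then for $2\le r\le m$ and $k=1,\dots,b$, $$\Delta^r_{J_{k-1}J_k}=(T^{r-1}_{J_{k-1}J_{k-1}})^{-1}\,\Delta^{r-1}_{J_{k-1}J_k}\,T^{r-1}_{J_kJ_k},$$ and all entries of $\Delta^r$ outside $\bigcup_k J_{k-1}\times J_k$ are zero. Consequently, in passing from $\Delta^{r-1}$ to $\Delta^r$, the only columns modified (by adding multiples of other columns) are columns $j$ such that $(j-r+1,j)$ is a change-of-basis pivot of iteration $r-1$, and the only rows modified (by adding multiples of other rows) are rows $p$ such that $(j-r+1,p)$ is the primary pivot used for some change-of-basis pivot $(j-r+1,j)$ of iteration $r-1$.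
   Context: Throughout, $\mathbb F$ is a field and $m\ge1$. $A_{IJ}$ is the submatrix of $A$ with rows in $I$, columns in $J$. $U^{pq}$ is the $m\times m$ matrix whose only nonzero entry is a $1$ in position $(p,q)$. Superscripts on matrices are indices, not powers. A connection matrix (over $\mathbb F$) is a matrix $\Delta\in\mathbb F^{m\times m}$ together with a partition $\{1,\dots,m\}=J_0\sqcup\cdots\sqcup J_b$ (the column/row partition; the $J_k$ need not consist of consecutive integers) such that $\Delta$ is upper triangular, $\Delta\Delta=0$, and $\Delta_{ij}=0$ unless $i<j$ and $(i,j)\in\bigcup_{k=1}^bJ_{k-1}\times J_k$. For $1\le r\le m-1$ the $r$-th diagonal is $\{(j-r,j):r<j\le m\}$. Incremental Sweeping Algorithm (ISA) applied to a connection matrix $\Delta$: set $\Delta^0=\Delta^1=\Delta$. For $r=1,\dots,m-1$ in turn: (Markup) for every position $(j-r,j)$ on the $r$-th diagonal with $\Delta^r_{j-r,j}\ne0$ such that no position in column $j$ was marked as a primary pivot at an earlier iteration: if some position $(j-r,p)$ of row $j-r$ was marked as a primary pivot at an earlier iteration, mark $(j-r,j)$ as a change-of-basis pivot of iteration $r$; otherwise mark $(j-r,j)$ permanently as a primary pivot. (Update) Let $T^r=I-\sum \frac{\Delta^r_{j-r,j}}{\Delta^r_{j-r,p}}U^{pj}$, the sum running over all change-of-basis pivots $(j-r,j)$ of iteration $r$, where $(j-r,p)$ is the primary pivot position in row $j-r$ (the primary pivot used for $(j-r,j)$); set $\Delta^{r+1}=(T^r)^{-1}\Delta^rT^r$.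 *)

theory Defs
  imports "Jordan_Normal_Form.DL_Submatrix"
begin

(* Conventions: matrices are Jordan_Normal_Form m x m matrices, indices 0-based
   (paper's index i corresponds to i-1 here).  Positions are pairs (row, column). *)

definition is_partition :: "nat \<Rightarrow> nat \<Rightarrow> (nat \<Rightarrow> nat set) \<Rightarrow> bool" where
  "is_partition m b J \<longleftrightarrow>
     (\<Union>k\<le>b. J k) = {..<m} \<and> (\<forall>k\<le>b. J k \<noteq> {}) \<and>
     (\<forall>k\<le>b. \<forall>l\<le>b. k \<noteq> l \<longrightarrow> J k \<inter> J l = {})"

definition block_support :: "nat \<Rightarrow> (nat \<Rightarrow> nat set) \<Rightarrow> (nat \<times> nat) set" where
  "block_support b J = (\<Union>k\<in>{1..b}. J (k - 1) \<times> J k)"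

definition connection_matrix :: "nat \<Rightarrow> nat \<Rightarrow> (nat \<Rightarrow> nat set) \<Rightarrow> 'a::field mat \<Rightarrow> bool" where
  "connection_matrix m b J D \<longleftrightarrow>
     D \<in> carrier_mat m m \<and> is_partition m b J \<and> upper_triangular D \<and> D * D = 0\<^sub>m m m \<and>
     (\<forall>i<m. \<forall>j<m. D $$ (i, j) \<noteq> 0 \<longrightarrow> i < j \<and> (i, j) \<in> block_support b J)"

definition unit_mat :: "nat \<Rightarrow> nat \<Rightarrow> nat \<Rightarrow> 'a::{zero,one} mat" where
  "unit_mat m p q = mat m m (\<lambda>(i, j). if i = p \<and> j = q then 1 else 0)"

definition inv_mat :: "'a::field mat \<Rightarrow> 'a mat" where
  "inv_mat A = (SOME B. B \<in> carrier_mat (dim_row A) (dim_row A) \<and>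
                        A * B = 1\<^sub>m (dim_row A) \<and> B * A = 1\<^sub>m (dim_row A))"

(* ISA, iteration r, given the current matrix D = \<Delta>^r and the set P of positions marked
   as primary pivots at earlier iterations *)

definition isa_cand :: "nat \<Rightarrow> nat \<Rightarrow> 'a::field mat \<Rightarrow> (nat \<times> nat) set \<Rightarrow> (nat \<times> nat) set" where
  "isa_cand m r D P = {(j - r, j) | j. r \<le> j \<and> j < m \<and> D $$ (j - r, j) \<noteq> 0 \<and>
                                     (\<forall>i. (i, j) \<notin> P)}"

definition isa_cob :: "nat \<Rightarrow> nat \<Rightarrow> 'a::field mat \<Rightarrow> (nat \<times> nat) set \<Rightarrow> (nat \<times> nat) set" where
  "isa_cob m r D P = {x \<in> isa_cand m r D P. \<exists>p. (fst x, p) \<in> P}"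

definition isa_newprim :: "nat \<Rightarrow> nat \<Rightarrow> 'a::field mat \<Rightarrow> (nat \<times> nat) set \<Rightarrow> (nat \<times> nat) set" where
  "isa_newprim m r D P = {x \<in> isa_cand m r D P. \<forall>p. (fst x, p) \<notin> P}"

definition prim_col :: "(nat \<times> nat) set \<Rightarrow> nat \<Rightarrow> nat" where
  "prim_col P i = (SOME p. (i, p) \<in> P)"

definition isa_T :: "nat \<Rightarrow> nat \<Rightarrow> 'a::field mat \<Rightarrow> (nat \<times> nat) set \<Rightarrow> 'a mat" where
  "isa_T m r D P = mat m m (\<lambda>(a, c). (1\<^sub>m m :: 'a mat) $$ (a, c) -
      (\<Sum>(i, j)\<in>isa_cob m r D P. (D $$ (i, j) / D $$ (i, prim_col P i)) *
                                      (unit_mat m (prim_col P i) j :: 'a mat) $$ (a, c)))"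

definition isa_step :: "nat \<Rightarrow> nat \<Rightarrow> 'a::field mat \<times> (nat \<times> nat) set \<Rightarrow> 'a mat \<times> (nat \<times> nat) set" where
  "isa_step m r S = (let D = fst S; P = snd S; T = isa_T m r D P in
     (inv_mat T * D * T, P \<union> isa_newprim m r D P))"

(* isa_state m \<Delta> r = (\<Delta>^r, primary pivots marked at iterations < r); \<Delta>^0 = \<Delta>^1 = \<Delta> *)
fun isa_state :: "nat \<Rightarrow> 'a::field mat \<Rightarrow> nat \<Rightarrow> 'a mat \<times> (nat \<times> nat) set" where
  "isa_state m D 0 = (D, {})"
| "isa_state m D (Suc r) = (if r = 0 then (D, {}) else isa_step m r (isa_state m D r))"

definition isa_Delta :: "nat \<Rightarrow> 'a::field mat \<Rightarrow> nat \<Rightarrow> 'a mat" where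
  "isa_Delta m D r = fst (isa_state m D r)"

definition isa_prim_before :: "nat \<Rightarrow> 'a::field mat \<Rightarrow> nat \<Rightarrow> (nat \<times> nat) set" where
  "isa_prim_before m D r = snd (isa_state m D r)"

definition isa_Tmat :: "nat \<Rightarrow> 'a::field mat \<Rightarrow> nat \<Rightarrow> 'a mat" where
  "isa_Tmat m D r = isa_T m r (isa_Delta m D r) (isa_prim_before m D r)"

definition isa_cob_pivots :: "nat \<Rightarrow> 'a::field mat \<Rightarrow> nat \<Rightarrow> (nat \<times> nat) set" where
  "isa_cob_pivots m D r = isa_cob m r (isa_Delta m D r) (isa_prim_before m D r)"

definition isa_used_prim_col :: "nat \<Rightarrow> 'a::field mat \<Rightarrow> nat \<Rightarrow> nat \<Rightarrow> nat" where
  "isa_used_prim_col m D r i = prim_col (isa_prim_before m D r) i"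

end

theory Submission imports Defs "Jordan_Normal_Form.Determinant" begin

lemma mult_entry:
  assumes "A \<in> carrier_mat n k" "B \<in> carrier_mat k l" "i < n" "j < l"
  shows "(A * B) $$ (i, j) = (\<Sum>a<k. A $$ (i, a) * B $$ (a, j))"
  using assms by (simp add: index_mult_mat scalar_prod_def lessThan_atLeast0)

lemma pick_bij:
  assumes "finite K"
  shows "bij_betw (pick K) {..<card K} K"
proof -
  have inj: "inj_on (pick K) {..<card K}"
    by (rule inj_onI, metis lessThan_iff nat_neq_iff pick_mono_le)
  have sub: "pick K ` {..<card K} \<subseteq> K" using pick_in_set_le by auto
  have "card (pick K ` {..<card K}) = card K" using card_image[OF inj] by simp
  then have "pick K ` {..<card K} = K" using card_subset_eq[OF assms sub] by simp
  with inj show ?thesis unfolding bij_betw_def by simp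
qed

lemma card_sub_lt: "K \<subseteq> {..<n} \<Longrightarrow> {i. i < n \<and> i \<in> K} = K" by auto

lemma submatrix_mult:
  assumes A: "A \<in> carrier_mat n k" and B: "B \<in> carrier_mat k l" and K: "K \<subseteq> {..<k}"
    and z: "\<And>i a. i \<in> I \<Longrightarrow> i < n \<Longrightarrow> a < k \<Longrightarrow> a \<notin> K \<Longrightarrow> A $$ (i, a) = 0"
  shows "submatrix (A * B) I L = submatrix A I K * submatrix B K L"
proof -
  have fK: "finite K" using K finite_subset by blast
  have cK: "card {i. i < k \<and> i \<in> K} = card K" using K by (metis card_sub_lt)
  show ?thesis
  proof (rule eq_matI)
    show "dim_row (submatrix (A * B) I L) = dim_row (submatrix A I K * submatrix B K L)"
      using A B by (simp add: dim_submatrix)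
    show "dim_col (submatrix (A * B) I L) = dim_col (submatrix A I K * submatrix B K L)"
      using A B by (simp add: dim_submatrix)
    fix x y assume x: "x < dim_row (submatrix A I K * submatrix B K L)"
      and y: "y < dim_col (submatrix A I K * submatrix B K L)"
    have x': "x < card {i. i < n \<and> i \<in> I}" using x A by (simp add: dim_submatrix)
    have y': "y < card {j. j < l \<and> j \<in> L}" using y B by (simp add: dim_submatrix)
    have pS: "pick I x \<in> {i. i < n \<and> i \<in> I}"
      using pick_reduce_set[OF x'] pick_in_set_le[OF x'] by simp
    then have px: "pick I x < n" and pxI: "pick I x \<in> I" by auto
    have "pick L y \<in> {j. j < l \<and> j \<in> L}"
      using pick_reduce_set[OF y'] pick_in_set_le[OF y'] by simp
    then have py: "pick L y < l" by auto
    have "submatrix (A * B) I L $$ (x, y) = (A * B) $$ (pick I x, pick L y)"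
      using x' y' A B by (simp add: submatrix_index)
    also have "\<dots> = (\<Sum>a<k. A $$ (pick I x, a) * B $$ (a, pick L y))"
      using mult_entry[OF A B px py] .
    also have "\<dots> = (\<Sum>a\<in>K. A $$ (pick I x, a) * B $$ (a, pick L y))"
      proof (rule sum.mono_neutral_right)
        show "\<forall>a\<in>{..<k} - K. A $$ (pick I x, a) * B $$ (a, pick L y) = 0"
          using z[OF pxI px] by auto
      qed (use K in auto)
    also have "\<dots> = (\<Sum>z<card K. A $$ (pick I x, pick K z) * B $$ (pick K z, pick L y))"
      using sum.reindex_bij_betw[OF pick_bij[OF fK], of "\<lambda>a. A $$ (pick I x, a) * B $$ (a, pick L y)"]
      by (simp only:)
    also have "\<dots> = (submatrix A I K * submatrix B K L) $$ (x, y)"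
    proof -
      have cA: "submatrix A I K \<in> carrier_mat (card {i. i < n \<and> i \<in> I}) (card K)"
        using A cK by (auto simp: dim_submatrix)
      have cB: "submatrix B K L \<in> carrier_mat (card K) (card {j. j < l \<and> j \<in> L})"
        using B cK by (auto simp: dim_submatrix)
      have "(\<Sum>z<card K. A $$ (pick I x, pick K z) * B $$ (pick K z, pick L y))
          = (\<Sum>z<card K. submatrix A I K $$ (x, z) * submatrix B K L $$ (z, y))"
      proof (rule sum.cong[OF refl])
        fix z assume "z \<in> {..<card K}"
        then have z: "z < card {j. j < dim_col A \<and> j \<in> K}" "z < card {j. j < dim_row B \<and> j \<in> K}"
          using A B cK by auto
        have x'': "x < card {i. i < dim_row A \<and> i \<in> I}" using x' A by simp
        have y'': "y < card {j. j < dim_col B \<and> j \<in> L}" using y' B by simp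
        show "A $$ (pick I x, pick K z) * B $$ (pick K z, pick L y)
          = submatrix A I K $$ (x, z) * submatrix B K L $$ (z, y)"
          using submatrix_index[OF x'' z(1)] submatrix_index[OF z(2) y''] by simp
      qed
      then show ?thesis using mult_entry[OF cA cB x' y'] by simp
    qed
    finally show "submatrix (A * B) I L $$ (x, y) = (submatrix A I K * submatrix B K L) $$ (x, y)" .
  qed
qed

lemma submatrix_one:
  assumes "I \<subseteq> {..<n}"
  shows "submatrix (1\<^sub>m n) I I = 1\<^sub>m (card I)"
proof -
  have c: "{i. i < n \<and> i \<in> I} = I" using assms by auto
  show ?thesis
  proof (rule eq_matI)
    fix x y assume x: "x < dim_row (1\<^sub>m (card I))" and y: "y < dim_col (1\<^sub>m (card I))"
    then have x': "x < card I" and y': "y < card I" by auto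
    have "pick I x \<in> I" "pick I y \<in> I" using pick_in_set_le x' y' by auto
    then have "pick I x < n" "pick I y < n" using assms by auto
    moreover have "pick I x = pick I y \<longleftrightarrow> x = y"
      using pick_mono_le[OF x', of y] pick_mono_le[OF y', of x] by (metis nat_neq_iff)
    ultimately show "submatrix (1\<^sub>m n) I I $$ (x, y) = 1\<^sub>m (card I) $$ (x, y)"
      using x' y' by (simp add: submatrix_index c)
  qed (auto simp: dim_submatrix c)
qed


lemma sub_carrier:
  assumes "A \<in> carrier_mat n l" "I \<subseteq> {..<n}" "K \<subseteq> {..<l}"
  shows "submatrix A I K \<in> carrier_mat (card I) (card K)"
proof -
  have "card {i. i < n \<and> i \<in> I} = card I" using assms(2) by (metis card_sub_lt)
  moreover have "card {i. i < l \<and> i \<in> K} = card K" using assms(3) by (metis card_sub_lt)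
  ultimately show ?thesis using assms(1) by (auto simp: dim_submatrix)
qed

lemma inv_mat_unique:
  assumes A: "A \<in> carrier_mat n n" and B: "(B::'a::field mat) \<in> carrier_mat n n"
    and AB: "A * B = 1\<^sub>m n" and BA: "B * A = 1\<^sub>m n"
  shows "inv_mat A = B"
proof -
  have ex: "\<exists>B. B \<in> carrier_mat (dim_row A) (dim_row A) \<and> A * B = 1\<^sub>m (dim_row A) \<and> B * A = 1\<^sub>m (dim_row A)"
    using A B AB BA by auto
  have P: "inv_mat A \<in> carrier_mat n n \<and> A * inv_mat A = 1\<^sub>m n \<and> inv_mat A * A = 1\<^sub>m n"
    using someI_ex[OF ex] A unfolding inv_mat_def by auto
  have P1: "inv_mat A \<in> carrier_mat n n" using P by blast
  have "inv_mat A = inv_mat A * (A * B)" unfolding AB using right_mult_one_mat[OF P1] by simp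
  also have "\<dots> = (inv_mat A * A) * B" using assoc_mult_mat[OF P1 A B] by simp
  also have "\<dots> = B" using P left_mult_one_mat[OF B] by simp
  finally show ?thesis .
qed

lemma inv_mat_props:
  assumes A: "A \<in> carrier_mat n n" and B: "(B::'a::field mat) \<in> carrier_mat n n"
    and AB: "A * B = 1\<^sub>m n" and BA: "B * A = 1\<^sub>m n"
  shows "inv_mat A \<in> carrier_mat n n" "A * inv_mat A = 1\<^sub>m n" "inv_mat A * A = 1\<^sub>m n"
  using inv_mat_unique[OF assms] assms by auto

definition sb :: "nat \<Rightarrow> (nat \<Rightarrow> nat set) \<Rightarrow> nat \<Rightarrow> nat \<Rightarrow> bool" where
  "sb b J a c \<longleftrightarrow> (\<exists>k\<le>b. a \<in> J k \<and> c \<in> J k)"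

lemma sb_sym: "sb b J a c \<Longrightarrow> sb b J c a" unfolding sb_def by blast

lemma sb_block:
  assumes "is_partition m b J" "sb b J a c" "l \<le> b" "a \<in> J l"
  shows "c \<in> J l"
  using assms unfolding sb_def is_partition_def by blast

lemma block_of:
  assumes "is_partition m b J" "a < m"
  shows "\<exists>k\<le>b. a \<in> J k"
  using assms unfolding is_partition_def by blast

lemma sb_refl: "is_partition m b J \<Longrightarrow> a < m \<Longrightarrow> sb b J a a"
  using block_of unfolding sb_def by blast

lemma part_sub: "is_partition m b J \<Longrightarrow> k \<le> b \<Longrightarrow> J k \<subseteq> {..<m}"
  unfolding is_partition_def by blast

lemma diag_left:
  assumes T: "T \<in> carrier_mat m m" and x: "x < m" and y: "y < m"
  shows "(mat m m (\<lambda>(x, y). if x = y \<and> x \<in> S then 1 else 0) * T) $$ (x, y)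
         = (if x \<in> S then T $$ (x, y) else (0::'a::field))"
proof -
  have E: "mat m m (\<lambda>(x, y). if x = y \<and> x \<in> S then 1 else 0) \<in> carrier_mat m m" by simp
  have "(mat m m (\<lambda>(x, y). if x = y \<and> x \<in> S then 1 else 0) * T) $$ (x, y)
      = (\<Sum>z<m. (if z = x then (if x \<in> S then T $$ (x, y) else 0) else 0))"
    unfolding mult_entry[OF E T x y] by (rule sum.cong, auto simp: x)
  also have "\<dots> = (if x \<in> S then T $$ (x, y) else 0)" using x by simp
  finally show ?thesis .
qed

lemma diag_right:
  assumes T: "T \<in> carrier_mat m m" and x: "x < m" and y: "y < m"
  shows "(T * mat m m (\<lambda>(x, y). if x = y \<and> x \<in> S then 1 else 0)) $$ (x, y)
         = (if y \<in> S then T $$ (x, y) else (0::'a::field))"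
proof -
  have E: "mat m m (\<lambda>(x, y). if x = y \<and> x \<in> S then 1 else 0) \<in> carrier_mat m m" by simp
  have "(T * mat m m (\<lambda>(x, y). if x = y \<and> x \<in> S then 1 else 0)) $$ (x, y)
      = (\<Sum>z<m. (if z = y then (if y \<in> S then T $$ (x, y) else 0) else 0))"
    unfolding mult_entry[OF T E x y] by (rule sum.cong, auto simp: y)
  also have "\<dots> = (if y \<in> S then T $$ (x, y) else 0)" using y by simp
  finally show ?thesis .
qed

lemma inv_blockdiag:
  assumes part: "is_partition m b J" and T: "T \<in> carrier_mat m m" and Ti: "(Ti::'a::field mat) \<in> carrier_mat m m"
    and TTi: "T * Ti = 1\<^sub>m m" and TiT: "Ti * T = 1\<^sub>m m"
    and Tsb: "\<And>a c. a < m \<Longrightarrow> c < m \<Longrightarrow> T $$ (a, c) \<noteq> 0 \<Longrightarrow> sb b J a c"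
    and a: "a < m" and c: "c < m" and nz: "Ti $$ (a, c) \<noteq> 0"
  shows "sb b J a c"
proof -
  obtain k where k: "k \<le> b" "a \<in> J k" using block_of[OF part a] by blast
  define E :: "'a mat" where "E = mat m m (\<lambda>(x, y). if x = y \<and> x \<in> J k then 1 else 0)"
  have E: "E \<in> carrier_mat m m" unfolding E_def by simp
  have ET: "E * T = T * E"
  proof (rule eq_matI)
    fix x y assume "x < dim_row (T * E)" "y < dim_col (T * E)"
    then have x: "x < m" and y: "y < m" using T E by auto
    show "(E * T) $$ (x, y) = (T * E) $$ (x, y)"
      unfolding E_def diag_left[OF T x y] diag_right[OF T x y]
      using Tsb[OF x y] sb_block[OF part _ k(1), of x y] sb_block[OF part sb_sym k(1), of x y]
      by auto
  qed (use T E in auto)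
  have "Ti * E = Ti * E * (T * Ti)" using TTi Ti E by simp
  also have "\<dots> = Ti * E * T * Ti"
    using assoc_mult_mat[OF mult_carrier_mat[OF Ti E] T Ti] by simp
  also have "\<dots> = Ti * (E * T) * Ti"
    using assoc_mult_mat[OF Ti E T] by simp
  also have "\<dots> = Ti * (T * E) * Ti" using ET by simp
  also have "\<dots> = (Ti * T) * E * Ti"
    using assoc_mult_mat[OF Ti T E] by simp
  also have "\<dots> = E * Ti" using TiT E Ti by simp
  finally have "Ti * E = E * Ti" .
  then have "(Ti * E) $$ (a, c) = (E * Ti) $$ (a, c)" by simp
  then have "(if c \<in> J k then Ti $$ (a, c) else 0) = Ti $$ (a, c)"
    unfolding E_def diag_left[OF Ti a c] diag_right[OF Ti a c] using k by simp
  then have "c \<in> J k" using nz by (auto split: if_splits)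
  then show ?thesis using k unfolding sb_def by blast
qed


definition good :: "nat \<Rightarrow> nat \<Rightarrow> (nat \<Rightarrow> nat set) \<Rightarrow> nat \<Rightarrow> 'a::field mat \<times> (nat \<times> nat) set \<Rightarrow> bool" where
  "good m b J s S \<longleftrightarrow> fst S \<in> carrier_mat m m \<and>
     (\<forall>i<m. \<forall>j<m. fst S $$ (i, j) \<noteq> 0 \<longrightarrow> (i, j) \<in> block_support b J) \<and>
     (\<forall>(i, p)\<in>snd S. i < p \<and> p < i + s \<and> p < m \<and> (i, p) \<in> block_support b J)"

lemma bs_same_row:
  assumes part: "is_partition m b J" and "(i, j) \<in> block_support b J" "(i, a) \<in> block_support b J"
  shows "sb b J j a"
proof -
  obtain k where k: "k \<in> {1..b}" "i \<in> J (k - 1)" "j \<in> J k" using assms(2) unfolding block_support_def by blast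
  obtain k' where k': "k' \<in> {1..b}" "i \<in> J (k' - 1)" "a \<in> J k'" using assms(3) unfolding block_support_def by blast
  have "k - 1 = k' - 1" using part k k' unfolding is_partition_def
    by (metis atLeastAtMost_iff disjoint_iff le_diff_conv trans_le_add1)
  then have "k = k'" using k(1) k'(1) by auto
  then show ?thesis using k k' unfolding sb_def by auto
qed

lemma bs_row:
  assumes part: "is_partition m b J" and "(i, a) \<in> block_support b J" "k \<in> {1..b}" "i \<in> J (k - 1)"
  shows "a \<in> J k"
proof -
  obtain k' where k': "k' \<in> {1..b}" "i \<in> J (k' - 1)" "a \<in> J k'" using assms(2) unfolding block_support_def by blast
  have "k - 1 = k' - 1" using part assms(3,4) k' unfolding is_partition_def
    by (metis atLeastAtMost_iff disjoint_iff le_diff_conv trans_le_add1)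
  then have "k = k'" using assms(3) k'(1) by auto
  then show ?thesis using k' by simp
qed

lemma bs_blocks:
  assumes part: "is_partition m b J" and "(x, y) \<in> block_support b J" "sb b J x i" "sb b J y j"
  shows "(i, j) \<in> block_support b J"
proof -
  obtain k where k: "k \<in> {1..b}" "x \<in> J (k - 1)" "y \<in> J k" using assms(2) unfolding block_support_def by blast
  have "i \<in> J (k - 1)" using sb_block[OF part assms(3) _ k(2)] k(1) by auto
  moreover have "j \<in> J k" using sb_block[OF part assms(4) _ k(3)] k(1) by auto
  ultimately show ?thesis using k(1) unfolding block_support_def by blast
qed

lemma unit_mat_index: "a < m \<Longrightarrow> c < m \<Longrightarrow> (unit_mat m p q :: 'a::{zero,one} mat) $$ (a, c) = (if a = p \<and> c = q then 1 else 0)"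
  unfolding unit_mat_def by simp

lemma T_entry:
  assumes "a < m" "c < m"
  shows "isa_T m s D P $$ (a, c) = (if a = c then 1 else 0) -
     (\<Sum>(i, j)\<in>isa_cob m s D P. (D $$ (i, j) / D $$ (i, prim_col P i)) *
          (if a = prim_col P i \<and> c = j then 1 else (0::'a::field)))"
  using assms unfolding isa_T_def by (simp add: unit_mat_index)

lemma cob_fact:
  assumes part: "is_partition m b J" and g: "good m b J s (D, P)" and x: "(i, j) \<in> isa_cob m s D P"
  shows "j < m \<and> i + s = j \<and> (i, j) \<in> block_support b J \<and> (i, prim_col P i) \<in> P \<and> prim_col P i < j
         \<and> sb b J (prim_col P i) j"
proof -
  from x obtain j' where j': "(i, j) = (j' - s, j')" "s \<le> j'" "j' < m" "D $$ (j' - s, j') \<noteq> 0"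
    and ex: "\<exists>p. (i, p) \<in> P"
    unfolding isa_cob_def isa_cand_def by auto
  have jj: "j = j'" "i = j - s" using j' by auto
  have ij: "i + s = j" using jj j' by auto
  have bs: "(i, j) \<in> block_support b J" using g j' jj unfolding good_def by auto
  have pp: "(i, prim_col P i) \<in> P" unfolding prim_col_def using someI_ex[OF ex] .
  then have "i < prim_col P i \<and> prim_col P i < i + s \<and> (i, prim_col P i) \<in> block_support b J"
    using g unfolding good_def by auto
  then show ?thesis using bs pp ij j' jj bs_same_row[OF part bs, of "prim_col P i"] sb_sym by auto
qed

lemma T_props:
  assumes part: "is_partition m b J" and g: "good m b J s (D, P)"
  defines "T \<equiv> isa_T m s D P"
  shows "T \<in> carrier_mat m m"
    and "\<And>a c. a < m \<Longrightarrow> c < m \<Longrightarrow> T $$ (a, c) \<noteq> 0 \<Longrightarrow> a \<noteq> c \<Longrightarrow>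
           \<exists>(i, j)\<in>isa_cob m s D P. a = prim_col P i \<and> c = j"
    and "\<And>a c. a < m \<Longrightarrow> c < m \<Longrightarrow> T $$ (a, c) \<noteq> 0 \<Longrightarrow> sb b J a c"
    and "\<And>a c. a < m \<Longrightarrow> c < m \<Longrightarrow> T $$ (a, c) \<noteq> 0 \<Longrightarrow> a \<le> c"
    and "\<And>a. a < m \<Longrightarrow> T $$ (a, a) = 1"
proof -
  show T: "T \<in> carrier_mat m m" unfolding T_def isa_T_def by simp
  show off: "\<exists>(i, j)\<in>isa_cob m s D P. a = prim_col P i \<and> c = j"
    if a: "a < m" and c: "c < m" and nz: "T $$ (a, c) \<noteq> 0" and ne: "a \<noteq> c" for a c
  proof -
    have "(\<Sum>(i, j)\<in>isa_cob m s D P. (D $$ (i, j) / D $$ (i, prim_col P i)) *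
          (if a = prim_col P i \<and> c = j then 1 else (0::'a))) \<noteq> 0"
      using nz ne unfolding T_def T_entry[OF a c] by simp
    then obtain x where "x \<in> isa_cob m s D P"
      "(case x of (i, j) \<Rightarrow> (D $$ (i, j) / D $$ (i, prim_col P i)) *
          (if a = prim_col P i \<and> c = j then 1 else (0::'a))) \<noteq> 0"
      using sum.not_neutral_contains_not_neutral by blast
    then show ?thesis by (cases x) (auto split: if_splits)
  qed
  show "sb b J a c" if a: "a < m" and c: "c < m" and nz: "T $$ (a, c) \<noteq> 0" for a c
  proof (cases "a = c")
    case True then show ?thesis using sb_refl[OF part a] by simp
  next
    case False
    then obtain i j where "(i, j) \<in> isa_cob m s D P" "a = prim_col P i" "c = j" using off[OF a c nz] by auto
    then show ?thesis using cob_fact[OF part g] by blast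
  qed
  show "a \<le> c" if a: "a < m" and c: "c < m" and nz: "T $$ (a, c) \<noteq> 0" for a c
  proof (cases "a = c")
    case True then show ?thesis by simp
  next
    case False
    then obtain i j where "(i, j) \<in> isa_cob m s D P" "a = prim_col P i" "c = j" using off[OF a c nz] by auto
    then show ?thesis using cob_fact[OF part g] by fastforce
  qed
  show "T $$ (a, a) = 1" if a: "a < m" for a
  proof -
    have "(\<Sum>(i, j)\<in>isa_cob m s D P. (D $$ (i, j) / D $$ (i, prim_col P i)) *
          (if a = prim_col P i \<and> a = j then 1 else (0::'a))) = 0"
    proof (rule sum.neutral, clarify)
      fix i j assume "(i, j) \<in> isa_cob m s D P"
      then have "prim_col P i < j" using cob_fact[OF part g] by blast
      then show "(D $$ (i, j) / D $$ (i, prim_col P i)) * (if a = prim_col P i \<and> a = j then 1 else 0) = 0"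
        by auto
    qed
    then show ?thesis unfolding T_def T_entry[OF a a] by simp
  qed
qed

lemma T_inv:
  assumes part: "is_partition m b J" and g: "good m b J s (D, P)"
  defines "T \<equiv> isa_T m s D P"
  shows "inv_mat T \<in> carrier_mat m m \<and> T * inv_mat T = 1\<^sub>m m \<and> inv_mat T * T = 1\<^sub>m m"
proof -
  note TP = T_props[OF part g, folded T_def]
  have ut: "upper_triangular T"
    unfolding upper_triangular_def
  proof (intro allI impI)
    fix i j assume i: "i < dim_row T" and ji: "j < i"
    then have "i < m" "j < m" using TP(1) by auto
    then show "T $$ (i, j) = 0" using TP(4)[of i j] ji by force
  qed
  have "diag_mat T = replicate m 1"
    using TP(1,5) by (simp add: diag_mat_def list_eq_iff_nth_eq)
  then have "det T = 1" using det_upper_triangular[OF ut TP(1)] by simp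
  then have "T \<in> Units (ring_mat TYPE('a) m ())" using det_non_zero_imp_unit[OF TP(1)] by simp
  then obtain B where B: "B \<in> carrier_mat m m" "B * T = 1\<^sub>m m" "T * B = 1\<^sub>m m"
    unfolding Units_def ring_mat_def by auto
  show ?thesis using inv_mat_props[OF TP(1) B(1) B(3) B(2)] by blast
qed


lemma mult_nz:
  assumes "A \<in> carrier_mat n k" "B \<in> carrier_mat k l" "i < n" "j < l" "(A * B) $$ (i, j) \<noteq> (0::'a::field)"
  shows "\<exists>a<k. A $$ (i, a) \<noteq> 0 \<and> B $$ (a, j) \<noteq> 0"
proof -
  have "(\<Sum>a<k. A $$ (i, a) * B $$ (a, j)) \<noteq> 0" using assms(5) unfolding mult_entry[OF assms(1-4)] .
  then obtain a where "a \<in> {..<k}" "A $$ (i, a) * B $$ (a, j) \<noteq> 0"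
    using sum.not_neutral_contains_not_neutral by blast
  then show ?thesis by auto
qed

lemma step_good:
  assumes part: "is_partition m b J" and g: "good m b J s (D, P)" and s: "1 \<le> s"
  shows "good m b J (Suc s) (isa_step m s (D, P))"
proof -
  define T where "T = isa_T m s D P"
  note TP = T_props[OF part g, folded T_def]
  note TI = T_inv[OF part g, folded T_def]
  have D: "D \<in> carrier_mat m m" using g unfolding good_def by simp
  have Ti: "inv_mat T \<in> carrier_mat m m" using TI by blast
  have Tisb: "sb b J a c" if "a < m" "c < m" "inv_mat T $$ (a, c) \<noteq> 0" for a c
    using inv_blockdiag[OF part TP(1) Ti _ _ TP(3) that] TI by blast
  have st: "isa_step m s (D, P) = (inv_mat T * D * T, P \<union> isa_newprim m s D P)"
    unfolding isa_step_def T_def Let_def by simp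
  have c1: "inv_mat T * D * T \<in> carrier_mat m m" using Ti D TP(1) by simp
  have c2: "(inv_mat T * D * T) $$ (i, j) \<noteq> 0 \<longrightarrow> (i, j) \<in> block_support b J" if ij: "i < m" "j < m" for i j
  proof
    assume nz: "(inv_mat T * D * T) $$ (i, j) \<noteq> 0"
    obtain y where y: "y < m" "(inv_mat T * D) $$ (i, y) \<noteq> 0" "T $$ (y, j) \<noteq> 0"
      using mult_nz[OF mult_carrier_mat[OF Ti D] TP(1) ij nz] by blast
    obtain x where x: "x < m" "inv_mat T $$ (i, x) \<noteq> 0" "D $$ (x, y) \<noteq> 0"
      using mult_nz[OF Ti D ij(1) y(1) y(2)] by blast
    have "(x, y) \<in> block_support b J" using g x y unfolding good_def by auto
    moreover have "sb b J x i" using Tisb[OF ij(1) x(1) x(2)] sb_sym by blast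
    moreover have "sb b J y j" using TP(3)[OF y(1) ij(2) y(3)] .
    ultimately show "(i, j) \<in> block_support b J" using bs_blocks[OF part] by blast
  qed
  have c3: "i < p \<and> p < i + Suc s \<and> p < m \<and> (i, p) \<in> block_support b J"
    if ip: "(i, p) \<in> P \<union> isa_newprim m s D P" for i p
  proof (cases "(i, p) \<in> P")
    case True then show ?thesis using g unfolding good_def by auto
  next
    case False
    then obtain j where j: "(i, p) = (j - s, j)" "s \<le> j" "j < m" "D $$ (j - s, j) \<noteq> 0"
      using ip unfolding isa_newprim_def isa_cand_def by auto
    have ip': "i = j - s" "p = j" using j(1) by auto
    have sup: "\<forall>i<m. \<forall>j<m. D $$ (i, j) \<noteq> 0 \<longrightarrow> (i, j) \<in> block_support b J"
      using g unfolding good_def by simp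
    have "j - s < m" using j by linarith
    then have "(j - s, j) \<in> block_support b J" using sup j(3,4) by blast
    moreover have "j - s < j" "j < j - s + Suc s" using j(2) s by linarith+
    ultimately show ?thesis unfolding ip' using j(3) by blast
  qed
  show ?thesis unfolding st good_def fst_conv snd_conv using c1 c2 c3 by blast
qed

lemma state_good:
  assumes part: "is_partition m b J" and D: "\<Delta> \<in> carrier_mat m m"
    and sup: "\<forall>i<m. \<forall>j<m. \<Delta> $$ (i, j) \<noteq> 0 \<longrightarrow> (i, j) \<in> block_support b J"
  shows "1 \<le> s \<Longrightarrow> good m b J s (isa_state m \<Delta> s)"
proof (induction s)
  case 0 then show ?case by simp
next
  case (Suc s)
  show ?case
  proof (cases "s = 0")
    case True then show ?thesis using D sup by (simp add: good_def)
  next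
    case False
    then have g: "good m b J s (isa_state m \<Delta> s)" using Suc by simp
    obtain D' P' where e: "isa_state m \<Delta> s = (D', P')" by fastforce
    show ?thesis using step_good[OF part g[unfolded e]] False e by simp
  qed
qed


lemma row_unit:
  assumes A: "A \<in> carrier_mat n k" and B: "B \<in> carrier_mat k l" and i: "i < n" "i < k" and j: "j < l"
    and u: "\<And>a. a < k \<Longrightarrow> A $$ (i, a) = (if a = i then 1 else (0::'a::field))"
  shows "(A * B) $$ (i, j) = B $$ (i, j)"
proof -
  have "(A * B) $$ (i, j) = (\<Sum>a<k. (if a = i then B $$ (i, j) else 0))"
    unfolding mult_entry[OF A B i(1) j] by (rule sum.cong, auto simp: u)
  then show ?thesis using i by simp
qed

lemma col_unit:
  assumes A: "A \<in> carrier_mat n k" and B: "B \<in> carrier_mat k l" and i: "i < n" and j: "j < l" "j < k"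
    and u: "\<And>a. a < k \<Longrightarrow> B $$ (a, j) = (if a = j then 1 else (0::'a::field))"
  shows "(A * B) $$ (i, j) = A $$ (i, j)"
proof -
  have "(A * B) $$ (i, j) = (\<Sum>a<k. (if a = j then A $$ (i, j) else 0))"
    unfolding mult_entry[OF A B i j(1)] by (rule sum.cong, auto simp: u)
  then show ?thesis using j by simp
qed

theorem mainTheorem5:
  fixes \<Delta> :: "'a::field mat" and m b :: nat and J :: "nat \<Rightarrow> nat set" and r :: nat
  assumes "m \<ge> 1"
    and "connection_matrix m b J \<Delta>"
    and "2 \<le> r" "r \<le> m"
  shows "(\<forall>k\<in>{1..b}.
            submatrix (isa_Delta m \<Delta> r) (J (k - 1)) (J k) =
              inv_mat (submatrix (isa_Tmat m \<Delta> (r - 1)) (J (k - 1)) (J (k - 1))) *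
              submatrix (isa_Delta m \<Delta> (r - 1)) (J (k - 1)) (J k) *
              submatrix (isa_Tmat m \<Delta> (r - 1)) (J k) (J k))
       \<and> (\<forall>i<m. \<forall>j<m. (i, j) \<notin> block_support b J \<longrightarrow> isa_Delta m \<Delta> r $$ (i, j) = 0)
       \<and> (let T = isa_Tmat m \<Delta> (r - 1);
              C = snd ` isa_cob_pivots m \<Delta> (r - 1);
              R = (\<lambda>(i, j). isa_used_prim_col m \<Delta> (r - 1) i) ` isa_cob_pivots m \<Delta> (r - 1)
          in isa_Delta m \<Delta> r = inv_mat T * isa_Delta m \<Delta> (r - 1) * T
             \<and> (\<forall>j<m. j \<notin> C \<longrightarrow> (\<forall>a<m. T $$ (a, j) = (if a = j then 1 else 0)))
             \<and> (\<forall>p<m. p \<notin> R \<longrightarrow> (\<forall>c<m. inv_mat T $$ (p, c) = (if p = c then 1 else 0)))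
             \<and> (\<forall>i<m. \<forall>j<m. isa_Delta m \<Delta> r $$ (i, j) \<noteq> isa_Delta m \<Delta> (r - 1) $$ (i, j)
                   \<longrightarrow> i \<in> R \<or> j \<in> C))"
proof -
  have cm: "\<Delta> \<in> carrier_mat m m" "is_partition m b J"
    "\<forall>i<m. \<forall>j<m. \<Delta> $$ (i, j) \<noteq> 0 \<longrightarrow> i < j \<and> (i, j) \<in> block_support b J"
    using assms(2) unfolding connection_matrix_def by auto
  note part = cm(2)
  have sup0: "\<forall>i<m. \<forall>j<m. \<Delta> $$ (i, j) \<noteq> 0 \<longrightarrow> (i, j) \<in> block_support b J" using cm(3) by blast
  define s where "s = r - 1"
  have s1: "1 \<le> s" and rs: "r = Suc s" and rs': "r - 1 = s" using assms(3) unfolding s_def by auto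
  obtain D P where e: "isa_state m \<Delta> s = (D, P)" by fastforce
  have g: "good m b J s (D, P)" using state_good[OF part cm(1) sup0 s1] e by simp
  define T where "T = isa_T m s D P"
  have Dd: "isa_Delta m \<Delta> s = D" using e unfolding isa_Delta_def by simp
  have Pd: "isa_prim_before m \<Delta> s = P" using e unfolding isa_prim_before_def by simp
  have Tm: "isa_Tmat m \<Delta> s = T" unfolding isa_Tmat_def Dd Pd T_def ..
  have cobd: "isa_cob_pivots m \<Delta> s = isa_cob m s D P" unfolding isa_cob_pivots_def Dd Pd ..
  have usedd: "(\<lambda>(i, j). isa_used_prim_col m \<Delta> s i) = (\<lambda>(i, j). prim_col P i)"
    unfolding isa_used_prim_col_def Pd ..
  have stS: "isa_state m \<Delta> r = isa_step m s (D, P)" using rs s1 e by simp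
  have Dr: "isa_Delta m \<Delta> r = inv_mat T * D * T"
    unfolding isa_Delta_def stS isa_step_def T_def Let_def by simp
  have gr: "good m b J (Suc s) (isa_state m \<Delta> r)" unfolding stS using step_good[OF part g s1] .
  note TP = T_props[OF part g, folded T_def]
  note TI = T_inv[OF part g, folded T_def]
  have D: "D \<in> carrier_mat m m" using g unfolding good_def by simp
  have supD: "\<forall>i<m. \<forall>j<m. D $$ (i, j) \<noteq> 0 \<longrightarrow> (i, j) \<in> block_support b J"
    using g unfolding good_def by simp
  have Ti: "inv_mat T \<in> carrier_mat m m" and TTi: "T * inv_mat T = 1\<^sub>m m"
    and TiT: "inv_mat T * T = 1\<^sub>m m" using TI by blast+
  have Tisb: "sb b J a c" if "a < m" "c < m" "inv_mat T $$ (a, c) \<noteq> 0" for a c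
    using inv_blockdiag[OF part TP(1) Ti TTi TiT TP(3) that] .
  have P1: "submatrix (inv_mat T * D * T) (J (k - 1)) (J k) =
              inv_mat (submatrix T (J (k - 1)) (J (k - 1))) * submatrix D (J (k - 1)) (J k) *
              submatrix T (J k) (J k)" if k: "k \<in> {1..b}" for k
  proof -
    define I where "I = J (k - 1)"
    define K where "K = J k"
    have kb: "k - 1 \<le> b" using k by auto
    have Isub: "I \<subseteq> {..<m}" unfolding I_def using part_sub[OF part kb] .
    have Ksub: "K \<subseteq> {..<m}" unfolding K_def using part_sub[OF part, of k] k by auto
    have zTi: "inv_mat T $$ (i, a) = 0" if "i \<in> I" "i < m" "a < m" "a \<notin> I" for i a
      using Tisb[of i a] sb_block[OF part _ kb, of i a] that unfolding I_def by blast
    have zT: "T $$ (i, a) = 0" if "i \<in> I" "i < m" "a < m" "a \<notin> I" for i a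
      using TP(3)[of i a] sb_block[OF part _ kb, of i a] that unfolding I_def by blast
    have zD: "D $$ (i, a) = 0" if "i \<in> I" "i < m" "a < m" "a \<notin> K" for i a
      using supD bs_row[OF part _ k, of i a] that unfolding I_def K_def by blast
    have "inv_mat T * D * T = inv_mat T * (D * T)" using assoc_mult_mat[OF Ti D TP(1)] .
    then have e1: "submatrix (inv_mat T * D * T) I K
        = submatrix (inv_mat T) I I * (submatrix D I K * submatrix T K K)"
      using submatrix_mult[OF Ti mult_carrier_mat[OF D TP(1)] Isub zTi]
        submatrix_mult[OF D TP(1) Ksub zD] by simp
    have cT: "submatrix T I I \<in> carrier_mat (card I) (card I)" using sub_carrier[OF TP(1) Isub Isub] .
    have cTi: "submatrix (inv_mat T) I I \<in> carrier_mat (card I) (card I)" using sub_carrier[OF Ti Isub Isub] .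
    have cD: "submatrix D I K \<in> carrier_mat (card I) (card K)" using sub_carrier[OF D Isub Ksub] .
    have cTK: "submatrix T K K \<in> carrier_mat (card K) (card K)" using sub_carrier[OF TP(1) Ksub Ksub] .
    have m1: "submatrix T I I * submatrix (inv_mat T) I I = 1\<^sub>m (card I)"
    proof -
      have "submatrix (T * inv_mat T) I I = submatrix T I I * submatrix (inv_mat T) I I"
        using zT by (intro submatrix_mult[OF TP(1) Ti Isub]) auto
      then show ?thesis using TTi submatrix_one[OF Isub] by metis
    qed
    have m2: "submatrix (inv_mat T) I I * submatrix T I I = 1\<^sub>m (card I)"
    proof -
      have "submatrix (inv_mat T * T) I I = submatrix (inv_mat T) I I * submatrix T I I"
        using zTi by (intro submatrix_mult[OF Ti TP(1) Isub]) auto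
      then show ?thesis using TiT submatrix_one[OF Isub] by metis
    qed
    have iv: "inv_mat (submatrix T I I) = submatrix (inv_mat T) I I"
      using inv_mat_unique[OF cT cTi m1 m2] .
    show ?thesis
      unfolding I_def[symmetric] K_def[symmetric] e1 iv
      using assoc_mult_mat[OF cTi cD cTK] by simp
  qed
  have Tcol: "T $$ (a, j) = (if a = j then 1 else 0)"
    if "j < m" "j \<notin> snd ` isa_cob m s D P" "a < m" for a j
  proof -
    have "(\<Sum>(i, j')\<in>isa_cob m s D P. (D $$ (i, j') / D $$ (i, prim_col P i)) *
          (if a = prim_col P i \<and> j = j' then 1 else (0::'a))) = 0"
    proof (rule sum.neutral, clarify)
      fix i j' assume "(i, j') \<in> isa_cob m s D P"
      then have "j \<noteq> j'" using that(2) by force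
      then show "(D $$ (i, j') / D $$ (i, prim_col P i)) * (if a = prim_col P i \<and> j = j' then 1 else 0) = 0"
        by simp
    qed
    then show ?thesis unfolding T_def T_entry[OF that(3) that(1)] by simp
  qed
  have Trow: "T $$ (p, a) = (if a = p then 1 else 0)"
    if "p < m" "p \<notin> (\<lambda>(i, j). prim_col P i) ` isa_cob m s D P" "a < m" for p a
  proof -
    have "(\<Sum>(i, j')\<in>isa_cob m s D P. (D $$ (i, j') / D $$ (i, prim_col P i)) *
          (if p = prim_col P i \<and> a = j' then 1 else (0::'a))) = 0"
    proof (rule sum.neutral, clarify)
      fix i j' assume "(i, j') \<in> isa_cob m s D P"
      then have "p \<noteq> prim_col P i" using that(2) by force
      then show "(D $$ (i, j') / D $$ (i, prim_col P i)) * (if p = prim_col P i \<and> a = j' then 1 else 0) = 0"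
        by simp
    qed
    then show ?thesis unfolding T_def T_entry[OF that(1) that(3)] by auto
  qed
  have Tirow: "inv_mat T $$ (p, c) = (if p = c then 1 else 0)"
    if "p < m" "p \<notin> (\<lambda>(i, j). prim_col P i) ` isa_cob m s D P" "c < m" for p c
  proof -
    have "(T * inv_mat T) $$ (p, c) = inv_mat T $$ (p, c)"
      using row_unit[OF TP(1) Ti that(1) that(1) that(3)] Trow[OF that(1,2)] by blast
    then show ?thesis using TTi that by simp
  qed
  have chg: "i \<in> (\<lambda>(i, j). prim_col P i) ` isa_cob m s D P \<or> j \<in> snd ` isa_cob m s D P"
    if "i < m" "j < m" "(inv_mat T * D * T) $$ (i, j) \<noteq> D $$ (i, j)" for i j
  proof (rule ccontr)
    assume "\<not> ?thesis"
    then have ni: "i \<notin> (\<lambda>(i, j). prim_col P i) ` isa_cob m s D P" and nj: "j \<notin> snd ` isa_cob m s D P" by auto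
    have "(inv_mat T * D * T) $$ (i, j) = (inv_mat T * D) $$ (i, j)"
      using col_unit[OF mult_carrier_mat[OF Ti D] TP(1) that(1) that(2) that(2)] Tcol[OF that(2) nj] by blast
    also have "\<dots> = D $$ (i, j)"
      using row_unit[OF Ti D that(1) that(1) that(2)] Tirow[OF that(1) ni] by (simp add: eq_commute)
    finally show False using that(3) by simp
  qed
  have supr: "\<forall>i<m. \<forall>j<m. (i, j) \<notin> block_support b J \<longrightarrow> isa_Delta m \<Delta> r $$ (i, j) = 0"
    using gr unfolding good_def isa_Delta_def by blast
  show ?thesis
    unfolding rs' Let_def Tm cobd usedd Dd
    using P1 supr Tcol Tirow chg unfolding Dr by blast
qed

end
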